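(* Let $d\ge1$, $\lambda>0$, $\delta>0$, and let $f:\mathbb{R}^d\to\mathbb{R}$ satisfy: (A1) $f$ is continuous and has at least one minimizer; (A2) $\int_{\mathbb{R}^d}\exp(-f(y)/\delta)\,dy<+\infty$; and assume $f\ge\underline f$ for a constant $\underline f$. Let $\bar Z_{\lambda,\delta}(x):=\mathbb{E}_{Y\sim\mathcal N(x,\lambda\delta I)}[e^{-f(Y)/\delta}]$. Assume the S-ZOPPA sequence $(x^k)$ remains in the closed ball $B_M(0)$ of radius $M$, and let $\underline Z_M:=\inf_{\|x\|\le M}\bar Z_{\lambda,\delta}(x)$ (which is $>0$). Let $C:=e^{-\underline f/\delta}$. Then for every $\varepsilon\in(0,\underline Z_M)$ and every $k\in\mathbb{N}$, \[\mathbb{P}\Big(\frac1{N_k}\sum_{i=1}^{N_k}e^{-f(y_i^k)/\delta}<\varepsilon\Big)\le\exp\Big(-\frac{2N_k(\underline Z_M-\varepsilon)^2}{C^2}\Big).\]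
   Context: S-ZOPPA: given $x^0\in\mathbb{R}^d$ and positive integers $(N_k)$, at iteration $k$ draw $y_1^k,\dots,y_{N_k}^k$ i.i.d. from $\mathcal N(x^k,\lambda\delta I)$ (conditionally on the past) and set $x^{k+1}=\dfrac{\sum_{i=1}^{N_k}y_i^k\exp(-f(y_i^k)/\delta)}{\sum_{i=1}^{N_k}\exp(-f(y_i^k)/\delta)}$. *)

theory Defs
  imports "HOL-Probability.Probability"
begin

definition gauss_density :: "real \<Rightarrow> real^'d \<Rightarrow> real^'d \<Rightarrow> real" where
  "gauss_density s m y =
     (2 * pi * s) powr (- real CARD('d) / 2) * exp (- (norm (y - m))\<^sup>2 / (2 * s))"

definition Zbar :: "real \<Rightarrow> real \<Rightarrow> (real^'d \<Rightarrow> real) \<Rightarrow> real^'d \<Rightarrow> real" where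
  "Zbar lam del f x = (LINT y|lborel. gauss_density (lam * del) x y * exp (- f y / del))"

text \<open>S-ZOPPA driven by noise xi k i (standard Gaussian):
  y_i^k = x^k + sqrt(lambda delta) xi_i^k, and x^(k+1) the Gibbs-weighted average.\<close>
fun szoppa_x :: "real^'d \<Rightarrow> real \<Rightarrow> real \<Rightarrow> (real^'d \<Rightarrow> real) \<Rightarrow> (nat \<Rightarrow> nat)
      \<Rightarrow> (nat \<Rightarrow> nat \<Rightarrow> 'w \<Rightarrow> real^'d) \<Rightarrow> nat \<Rightarrow> 'w \<Rightarrow> real^'d" where
  "szoppa_x x0 lam del f N \<xi> 0 \<omega> = x0"
| "szoppa_x x0 lam del f N \<xi> (Suc k) \<omega> =
     (let y = (\<lambda>i. szoppa_x x0 lam del f N \<xi> k \<omega> + sqrt (lam * del) *\<^sub>R \<xi> k i \<omega>)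
      in (\<Sum>i<N k. exp (- f (y i) / del) *\<^sub>R y i) /\<^sub>R (\<Sum>i<N k. exp (- f (y i) / del)))"

definition szoppa_y :: "real^'d \<Rightarrow> real \<Rightarrow> real \<Rightarrow> (real^'d \<Rightarrow> real) \<Rightarrow> (nat \<Rightarrow> nat)
      \<Rightarrow> (nat \<Rightarrow> nat \<Rightarrow> 'w \<Rightarrow> real^'d) \<Rightarrow> nat \<Rightarrow> nat \<Rightarrow> 'w \<Rightarrow> real^'d" where
  "szoppa_y x0 lam del f N \<xi> k i \<omega> = szoppa_x x0 lam del f N \<xi> k \<omega> + sqrt (lam * del) *\<^sub>R \<xi> k i \<omega>"

end

theory Submission
  imports Defs
begin


lemma lborel_integral_affine_eucl:
  fixes g :: "'a::euclidean_space \<Rightarrow> real" and c :: real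
  assumes c: "c \<noteq> 0" and g[measurable]: "g \<in> borel_measurable borel"
  shows "(\<integral>y. g y \<partial>lborel) = \<bar>c\<bar>^DIM('a) * (\<integral>z. g (t + c *\<^sub>R z) \<partial>lborel)"
proof -
  have "(\<integral>y. g y \<partial>lborel) = (\<integral>y. g y \<partial>density (distr lborel borel (\<lambda>x. t + c *\<^sub>R x)) (\<lambda>_. \<bar>c\<bar>^DIM('a)))"
    by (subst lborel_affine[OF c, of t]) simp
  also have "\<dots> = (\<integral>y. \<bar>c\<bar>^DIM('a) * g y \<partial>distr lborel borel (\<lambda>x. t + c *\<^sub>R x))"
    by (subst integral_density) auto
  also have "\<dots> = (\<integral>z. \<bar>c\<bar>^DIM('a) * g (t + c *\<^sub>R z) \<partial>lborel)"
    by (subst integral_distr) auto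
  finally show ?thesis by simp
qed

lemma gauss_scale:
  fixes s lam del :: real and z x :: "real^'d" assumes s: "s > 0" and ss: "s * s = lam * del" and lam: "lam > 0" and del: "del > 0"
  shows "\<bar>s\<bar>^DIM(real^'d) * gauss_density (lam*del) x (x + s *\<^sub>R z) = gauss_density 1 0 z"
proof -
  have n1: "norm (s *\<^sub>R z) = s * norm z" using s by simp
  have n0: "(norm (s *\<^sub>R z))\<^sup>2 = (lam*del) * (norm z)\<^sup>2"
    unfolding n1 power_mult_distrib power2_eq_square[of s] ss ..
  have ld: "lam * del \<noteq> 0" using lam del by simp
  have n: "(norm (s *\<^sub>R z))\<^sup>2 / (2 * (lam*del)) = (norm z)\<^sup>2 / 2"
    unfolding n0 using ld by simp
  have p: "(2 * pi * (lam * del)) powr (- real CARD('d) / 2) = (2 * pi) powr (- real CARD('d) / 2) * inverse (s ^ CARD('d))"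
  proof -
    have "(s * s) powr (- real CARD('d) / 2) = s powr (- real CARD('d) / 2) * s powr (- real CARD('d) / 2)"
      using s by (simp add: powr_mult)
    also have "\<dots> = s powr (- real CARD('d))" by (simp add: powr_add[symmetric])
    also have "\<dots> = inverse (s ^ CARD('d))" using s by (simp add: powr_minus powr_realpow)
    finally show ?thesis unfolding ss[symmetric] using s by (simp add: powr_mult)
  qed
  have "\<bar>s\<bar>^DIM(real^'d) * gauss_density (lam*del) x (x + s *\<^sub>R z) = 
     s ^ CARD('d) * ((2 * pi) powr (- real CARD('d) / 2) * inverse (s ^ CARD('d))) * exp (- (norm z)\<^sup>2 / 2)"
    unfolding gauss_density_def p using s n by simp
  also have "\<dots> = gauss_density 1 0 z"
    unfolding gauss_density_def using s by simp
  finally show ?thesis .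
qed

lemma gauss_density_measurable[measurable]:
  "(\<lambda>y. gauss_density s x y) \<in> borel_measurable borel"
  unfolding gauss_density_def by measurable

lemma Zbar_eq:
  fixes f :: "real^'d \<Rightarrow> real"
  assumes lam: "lam > 0" and del: "del > 0" and f[measurable]: "f \<in> borel_measurable borel"
  shows "Zbar lam del f x = (\<integral>z. gauss_density 1 0 z * exp (- f (x + sqrt (lam*del) *\<^sub>R z) / del) \<partial>lborel)"
proof -
  define s where "s = sqrt (lam*del)"
  have s: "s > 0" using lam del by (simp add: s_def)
  have ss: "s * s = lam * del" using lam del by (simp add: s_def)
  have "Zbar lam del f x = \<bar>s\<bar>^DIM(real^'d) * (\<integral>z. gauss_density (lam*del) x (x + s *\<^sub>R z) * exp (- f (x + s *\<^sub>R z) / del) \<partial>lborel)"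
    unfolding Zbar_def
    by (rule lborel_integral_affine_eucl) (use s in auto)
  also have "\<dots> = (\<integral>z. \<bar>s\<bar>^DIM(real^'d) * gauss_density (lam*del) x (x + s *\<^sub>R z) * exp (- f (x + s *\<^sub>R z) / del) \<partial>lborel)"
    by (simp add: mult.assoc)
  also have "\<dots> = (\<integral>z. gauss_density 1 0 z * exp (- f (x + s *\<^sub>R z) / del) \<partial>lborel)"
    using gauss_scale[OF s ss lam del, where 'd='d] by simp
  finally show ?thesis by (simp add: s_def)
qed


lemma fixed_hoeffding:
  fixes P :: "'w measure" and \<xi> :: "nat \<Rightarrow> nat \<Rightarrow> 'w \<Rightarrow> real^'d"
    and f :: "real^'d \<Rightarrow> real" and x :: "real^'d" and n k :: nat
    and lam del flow Z \<epsilon> :: real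
  assumes PS: "prob_space P"
    and D: "\<And>k i. distributed P lborel (\<xi> k i) (\<lambda>z. ennreal (gauss_density 1 0 z))"
    and IND: "prob_space.indep_vars P (\<lambda>_. borel) (\<lambda>p. \<xi> (fst p) (snd p)) UNIV"
    and n: "n > 0"
    and lam: "lam > 0" and del: "del > 0"
    and fm[measurable]: "f \<in> borel_measurable borel"
    and fl: "\<And>y. f y \<ge> flow"
    and eps: "0 < \<epsilon>" "\<epsilon> < Z" and ZZ: "Z \<le> Zbar lam del f x"
  shows "measure P {\<omega> \<in> space P. (1 / real n) * (\<Sum>i<n. exp (- f (x + sqrt (lam*del) *\<^sub>R \<xi> k i \<omega>) / del)) < \<epsilon>}
     \<le> exp (- 2 * real n * (Z - \<epsilon>)\<^sup>2 / (exp (- flow / del))\<^sup>2)"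
proof -
  interpret prob_space P by (rule PS)
  define s where "s = sqrt (lam*del)"
  define C where "C = exp (- flow / del)"
  have Cpos: "C > 0" by (simp add: C_def)
  define X where "X = (\<lambda>i \<omega>. exp (- f (x + s *\<^sub>R \<xi> k i \<omega>) / del))"
  have xim[measurable]: "\<xi> j i \<in> borel_measurable P" for j i
    using distributed_measurable[OF D[of j i]] by simp
  have Xm[measurable]: "X i \<in> borel_measurable P" for i
    unfolding X_def by measurable
  have ind1: "indep_vars (\<lambda>j. PiM {(k,j)} (\<lambda>_. borel)) (\<lambda>j \<omega>. restrict (\<lambda>p. \<xi> (fst p) (snd p) \<omega>) {(k,j)}) {..<n}"
    by (rule indep_vars_restrict[OF IND]) (auto simp: disjoint_family_on_def)
  have ind2: "indep_vars (\<lambda>_. borel) (\<lambda>j \<omega>. (\<lambda>v. exp (- f (x + s *\<^sub>R v (k,j)) / del)) (restrict (\<lambda>p. \<xi> (fst p) (snd p) \<omega>) {(k,j)})) {..<n}"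
    by (rule indep_vars_compose2[OF ind1]) measurable
  have indX: "indep_vars (\<lambda>_. borel) X {..<n}"
    using ind2 by (rule indep_vars_cong[THEN iffD1, rotated 3]) (auto simp: X_def)
  have bnd: "X i \<omega> \<in> {0..C}" for i \<omega>
    using fl[of "x + s *\<^sub>R \<xi> k i \<omega>"] del by (auto simp: X_def C_def divide_right_mono)
  have EX: "expectation (X i) = Zbar lam del f x" for i
  proof -
    have "Zbar lam del f x = (\<integral>z. gauss_density 1 0 z * exp (- f (x + s *\<^sub>R z) / del) \<partial>lborel)"
      unfolding s_def by (rule Zbar_eq[OF lam del fm])
    also have "\<dots> = expectation (X i)"
      unfolding X_def
      by (rule distributed_integral[OF D[of k i]]) (auto simp: gauss_density_def)
    finally show ?thesis by simp
  qed
  interpret H: Hoeffding_ineq P "{..<n}" X "\<lambda>_. 0" "\<lambda>_. C" "real n * Zbar lam del f x"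
    by unfold_locales (use indX bnd EX in auto)
  define t where "t = real n * (Zbar lam del f x - \<epsilon>)"
  have t0: "t \<ge> 0" using eps ZZ by (simp add: t_def)
  have pos: "(\<Sum>i<n. (C - 0)\<^sup>2) > 0" using n Cpos by simp
  have sub: "{\<omega> \<in> space P. (1 / real n) * (\<Sum>i<n. X i \<omega>) < \<epsilon>} \<subseteq> {\<omega> \<in> space P. (\<Sum>i<n. X i \<omega>) \<le> real n * Zbar lam del f x - t}"
  proof safe
    fix \<omega> assume "1 / real n * (\<Sum>i<n. X i \<omega>) < \<epsilon>"
    then have "(\<Sum>i<n. X i \<omega>) < real n * \<epsilon>" using n by (simp add: field_simps)
    then show "(\<Sum>i<n. X i \<omega>) \<le> real n * Zbar lam del f x - t" by (simp add: t_def algebra_simps)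
  qed
  have "measure P {\<omega> \<in> space P. (1 / real n) * (\<Sum>i<n. X i \<omega>) < \<epsilon>} \<le> measure P {\<omega> \<in> space P. (\<Sum>i<n. X i \<omega>) \<le> real n * Zbar lam del f x - t}"
    by (rule finite_measure_mono[OF sub]) measurable
  also have "\<dots> \<le> exp (-2 * t\<^sup>2 / (\<Sum>i<n. (C - 0)\<^sup>2))"
    by (rule H.Hoeffding_ineq_le[OF t0 pos])
  also have "\<dots> \<le> exp (- 2 * real n * (Z - \<epsilon>)\<^sup>2 / C\<^sup>2)"
  proof -
    have a: "real n * (Z - \<epsilon>) \<le> t" using ZZ n by (simp add: t_def mult_left_mono)
    have b: "0 \<le> real n * (Z - \<epsilon>)" using eps by simp
    have "(real n * (Z - \<epsilon>))\<^sup>2 \<le> t\<^sup>2" using a b by (rule power_mono)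
    then have "real n * (real n * (Z - \<epsilon>)\<^sup>2) \<le> t\<^sup>2" by (simp add: power_mult_distrib power2_eq_square mult_ac)
    then have "2 * real n * (Z - \<epsilon>)\<^sup>2 / C\<^sup>2 \<le> 2 * t\<^sup>2 / (real n * C\<^sup>2)"
      using n Cpos by (simp add: field_simps)
    then show ?thesis by simp
  qed
  finally show ?thesis unfolding X_def s_def C_def .
qed


lemma szoppa_x_dep:
  "(\<forall>j<k. \<forall>i. \<xi> j i \<omega> = \<xi>' j i \<omega>') \<Longrightarrow>
   szoppa_x x0 lam del f N \<xi> k \<omega> = szoppa_x x0 lam del f N \<xi>' k \<omega>'"
  by (induction k) (simp_all add: Let_def)

lemma szoppa_x_meas:
  fixes f :: "real^'d \<Rightarrow> real"
  assumes fm[measurable]: "f \<in> borel_measurable borel"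
  shows "k \<le> K \<Longrightarrow> (\<lambda>w. szoppa_x x0 lam del f N (\<lambda>j i w. w (j,i)) k w)
     \<in> borel_measurable (PiM {p. fst p < K} (\<lambda>_. (borel :: (real^'d) measure)))"
proof (induction k)
  case 0
  then show ?case by simp
next
  case (Suc k)
  then have IH[measurable]: "(\<lambda>w. szoppa_x x0 lam del f N (\<lambda>j i w. w (j,i)) k w)
     \<in> borel_measurable (PiM {p. fst p < K} (\<lambda>_. (borel :: (real^'d) measure)))" by simp
  have kK: "(k, i) \<in> {p. fst p < K}" for i using Suc by simp
  note [measurable] = measurable_component_singleton[OF kK]
  show ?case by (simp add: Let_def) measurable
qed



theorem proposition5:
  fixes P :: "'w measure" and \<xi> :: "nat \<Rightarrow> nat \<Rightarrow> 'w \<Rightarrow> real^'d"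
    and f :: "real^'d \<Rightarrow> real" and x0 :: "real^'d" and N :: "nat \<Rightarrow> nat"
    and lam del flow M :: real
  assumes "prob_space P"
    and "\<And>k i. distributed P lborel (\<xi> k i) (\<lambda>z. ennreal (gauss_density 1 0 z))"
    and "prob_space.indep_vars P (\<lambda>_. borel) (\<lambda>p. \<xi> (fst p) (snd p)) UNIV"
    and "\<And>k. N k > 0"
    and "lam > 0" and "del > 0"
    and "continuous_on UNIV f" and "\<exists>xm. \<forall>y. f xm \<le> f y"
    and "(\<integral>\<^sup>+ y. ennreal (exp (- f y / del)) \<partial>lborel) < \<infinity>"
    and "\<And>y. f y \<ge> flow"
    and "AE \<omega> in P. \<forall>k. norm (szoppa_x x0 lam del f N \<xi> k \<omega>) \<le> M"
  shows "\<forall>\<epsilon> k. 0 < \<epsilon> \<and> \<epsilon> < (INF x\<in>cball 0 M. Zbar lam del f x) \<longrightarrow>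
     measure P {\<omega> \<in> space P.
        (1 / real (N k)) * (\<Sum>i<N k. exp (- f (szoppa_y x0 lam del f N \<xi> k i \<omega>) / del)) < \<epsilon>}
     \<le> exp (- 2 * real (N k) * ((INF x\<in>cball 0 M. Zbar lam del f x) - \<epsilon>)\<^sup>2
              / (exp (- flow / del))\<^sup>2)"
proof (intro allI impI, elim conjE)
  fix \<epsilon> k
  assume eps: "0 < \<epsilon>" "\<epsilon> < (INF x\<in>cball 0 M. Zbar lam del f x)"
  note PS = assms(1) and D = assms(2) and IND = assms(3) and lam = assms(5) and del = assms(6)
  interpret prob_space P by (rule PS)
  have fm[measurable]: "f \<in> borel_measurable borel"
    by (rule borel_measurable_continuous_onI[OF assms(7)])
  define Zm where "Zm = (INF x\<in>cball 0 M. Zbar lam del f x)"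
  define n where "n = N k"
  have n: "n > 0" using assms(4) by (simp add: n_def)
  define s where "s = sqrt (lam*del)"
  define B where "B = exp (- 2 * real n * (Zm - \<epsilon>)\<^sup>2 / (exp (- flow / del))\<^sup>2)"
  have Zb0: "Zbar lam del f x \<ge> 0" for x
    unfolding Zbar_def by (rule Bochner_Integration.integral_nonneg) (simp add: gauss_density_def)
  have Zlow: "Zm \<le> Zbar lam del f x" if "norm x \<le> M" for x
    unfolding Zm_def
    by (rule cINF_lower) (use that Zb0 in \<open>auto intro!: bdd_belowI2[of _ 0]\<close>)
  have xim[measurable]: "\<xi> j i \<in> borel_measurable P" for j i
    using distributed_measurable[OF D[of j i]] by simp
  define A where "A = {p :: nat \<times> nat. fst p < k}"
  define Bk where "Bk = {p :: nat \<times> nat. fst p = k}"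
  define MB where "MB = PiM Bk (\<lambda>_. (borel :: (real^'d) measure))"
  define WA where "WA = (\<lambda>\<omega>. restrict (\<lambda>p. \<xi> (fst p) (snd p) \<omega>) A)"
  define V where "V = (\<lambda>\<omega>. restrict (\<lambda>p. \<xi> (fst p) (snd p) \<omega>) Bk)"
  define h where "h = (\<lambda>w. szoppa_x x0 lam del f N (\<lambda>j i w. w (j,i)) k w)"
  have hm: "h \<in> borel_measurable (PiM A (\<lambda>_. (borel :: (real^'d) measure)))"
    unfolding h_def A_def by (rule szoppa_x_meas[OF fm]) simp
  have hW: "h (WA \<omega>) = szoppa_x x0 lam del f N \<xi> k \<omega>" for \<omega>
    unfolding h_def WA_def A_def by (rule szoppa_x_dep) auto
  define MA where "MA = PiM A (\<lambda>_. (borel :: (real^'d) measure))"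
  note hm[unfolded MA_def[symmetric], measurable]
  have ind: "indep_var MA WA MB V"
    unfolding WA_def V_def MB_def MA_def
    by (rule indep_var_restrict[OF IND]) (auto simp: A_def Bk_def)
  have Wm[measurable]: "WA \<in> measurable P MA" and Vm[measurable]: "V \<in> measurable P MB"
    using ind indep_var_distribution_eq by blast+
  have prodeq: "distr P MA WA \<Otimes>\<^sub>M distr P MB V = distr P (MA \<Otimes>\<^sub>M MB) (\<lambda>\<omega>. (WA \<omega>, V \<omega>))"
    using ind indep_var_distribution_eq by blast
  define S where "S = {z \<in> space (MA \<Otimes>\<^sub>M MB). (1 / real n) * (\<Sum>i<n. exp (- f (h (fst z) + s *\<^sub>R snd z (k,i)) / del)) < \<epsilon>}"
  have kB: "(k, i) \<in> Bk" for i by (simp add: Bk_def)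
  note [measurable] = measurable_component_singleton[OF kB, where M="\<lambda>_. (borel :: (real^'d) measure)"]
  have Sm[measurable]: "S \<in> sets (MA \<Otimes>\<^sub>M MB)"
    unfolding S_def MB_def by measurable
  have Vsp: "V \<omega> \<in> space MB" if "\<omega> \<in> space P" for \<omega>
    using measurable_space[OF Vm that] .
  have Wsp: "WA \<omega> \<in> space MA" if "\<omega> \<in> space P" for \<omega>
    using measurable_space[OF Wm that] .
  have VBk: "V \<omega> (k, i) = \<xi> k i \<omega>" for \<omega> i by (simp add: V_def Bk_def)
  have Eeq: "{\<omega> \<in> space P. (1 / real (N k)) * (\<Sum>i<N k. exp (- f (szoppa_y x0 lam del f N \<xi> k i \<omega>) / del)) < \<epsilon>}
      = (\<lambda>\<omega>. (WA \<omega>, V \<omega>)) -` S \<inter> space P"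
    using Vsp Wsp by (auto simp: S_def szoppa_y_def hW VBk s_def n_def space_pair_measure)
  interpret PV: prob_space "distr P MB V" by (rule prob_space_distr) simp
  interpret PX: prob_space "distr P MA WA" by (rule prob_space_distr) simp
  have AEX: "AE x in distr P MA WA. norm (h x) \<le> M"
  proof (subst AE_distr_iff)
    show "AE \<omega> in P. norm (h (WA \<omega>)) \<le> M" using assms(11) by eventually_elim (simp add: hW)
  qed simp_all
  have pt: "emeasure (distr P MB V) (Pair x -` S) \<le> ennreal B" if "norm (h x) \<le> M" "x \<in> space MA" for x
  proof -
    have "emeasure (distr P MB V) (Pair x -` S) = emeasure P (V -` (Pair x -` S) \<inter> space P)"
      by (rule emeasure_distr) (simp_all add: sets_Pair1)
    also have "V -` (Pair x -` S) \<inter> space P = {\<omega> \<in> space P. (1 / real n) * (\<Sum>i<n. exp (- f (h x + sqrt (lam*del) *\<^sub>R \<xi> k i \<omega>) / del)) < \<epsilon>}"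
      using Vsp that(2) by (auto simp: S_def VBk s_def space_pair_measure)
    also have "emeasure P \<dots> = ennreal (measure P \<dots>)" by (simp add: emeasure_eq_measure)
    also have "\<dots> \<le> ennreal B"
      unfolding B_def
      by (rule ennreal_leI, rule fixed_hoeffding[OF PS D IND n lam del fm assms(10)])
         (use eps Zlow[OF that(1)] in \<open>simp_all add: Zm_def\<close>)
    finally show ?thesis .
  qed
  have "emeasure P ((\<lambda>\<omega>. (WA \<omega>, V \<omega>)) -` S \<inter> space P) = emeasure (distr P (MA \<Otimes>\<^sub>M MB) (\<lambda>\<omega>. (WA \<omega>, V \<omega>))) S"
    by (rule emeasure_distr[symmetric]) simp_all
  also have "\<dots> = emeasure (distr P MA WA \<Otimes>\<^sub>M distr P MB V) S" unfolding prodeq ..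
  also have "\<dots> = (\<integral>\<^sup>+x. emeasure (distr P MB V) (Pair x -` S) \<partial>distr P MA WA)"
    by (rule PV.emeasure_pair_measure_alt) simp
  also have "\<dots> \<le> (\<integral>\<^sup>+x. ennreal B \<partial>distr P MA WA)"
    by (rule nn_integral_mono_AE) (use AE_conjI[OF AEX AE_space] pt in \<open>auto elim: eventually_mono\<close>)
  also have "\<dots> = ennreal B" using PX.emeasure_space_1 by simp
  finally have "emeasure P ((\<lambda>\<omega>. (WA \<omega>, V \<omega>)) -` S \<inter> space P) \<le> ennreal B" .
  then have "measure P ((\<lambda>\<omega>. (WA \<omega>, V \<omega>)) -` S \<inter> space P) \<le> B"
    by (simp add: emeasure_eq_measure B_def)
  then show "measure P {\<omega> \<in> space P.
        (1 / real (N k)) * (\<Sum>i<N k. exp (- f (szoppa_y x0 lam del f N \<xi> k i \<omega>) / del)) < \<epsilon>}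
     \<le> exp (- 2 * real (N k) * ((INF x\<in>cball 0 M. Zbar lam del f x) - \<epsilon>)\<^sup>2
              / (exp (- flow / del))\<^sup>2)"
    unfolding Eeq B_def Zm_def n_def .
qed

end
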